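(* Let $\rho\in\mathbb R$ and let $\mathbf b=\{b_n\}_{n\ge1}$ be an admissible sequence of real numbers. For every $\beta\in\mathbb R$ assume that the Dirichlet series $f_\beta(s)=\sum_{n\in\mathrm{supp}(\mathbf b)}n^{i\beta}b_nn^{-s}$ converges on $\mathbb H_\rho$. Then the family $\{f_\beta:\beta\in\mathbb R\}$ is linearly independent in the space $\mathrm{Hol}(\mathbb H_\rho)$ of holomorphic functions on $\mathbb H_\rho$.
   Context: $\mathbb H_\rho=\{\Re s>\rho\}$. A sequence $\mathbf b$ of real numbers is admissible if its support $\mathrm{supp}(\mathbf b)=\{n\in\mathbb N:b_n\ne0\}$ is an infinite subset of $\mathbb N$ closed under multiplication and there exist $p,q\in\mathrm{supp}(\mathbf b)\setminus\{1\}$ with $\gcd(p,q)=1$. *)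

theory Defs
  imports "HOL-Complex_Analysis.Complex_Analysis"
begin

text \<open>Support of a sequence indexed by the positive integers (index 0 is ignored).\<close>
definition supp_seq :: "(nat \<Rightarrow> real) \<Rightarrow> nat set" where
  "supp_seq b = {n. n \<ge> 1 \<and> b n \<noteq> 0}"

definition admissible :: "(nat \<Rightarrow> real) \<Rightarrow> bool" where
  "admissible b \<longleftrightarrow>
     infinite (supp_seq b) \<and>
     (\<forall>m\<in>supp_seq b. \<forall>n\<in>supp_seq b. m * n \<in> supp_seq b) \<and>
     (\<exists>p\<in>supp_seq b - {1}. \<exists>q\<in>supp_seq b - {1}. coprime p q)"

definition half_plane :: "real \<Rightarrow> complex set" where
  "half_plane \<rho> = {s. Re s > \<rho>}"

definition tw_term :: "(nat \<Rightarrow> real) \<Rightarrow> real \<Rightarrow> complex \<Rightarrow> nat \<Rightarrow> complex" where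
  "tw_term b \<beta> s n =
     (if n \<in> supp_seq b
      then of_nat n powr (\<i> * of_real \<beta>) * of_real (b n) * of_nat n powr (- s)
      else 0)"

definition tw_series :: "(nat \<Rightarrow> real) \<Rightarrow> real \<Rightarrow> complex \<Rightarrow> complex" where
  "tw_series b \<beta> s = (\<Sum>n. tw_term b \<beta> s n)"

end

theory Submission
  imports Defs
begin


lemma abel_partial:
  fixes u g :: "nat \<Rightarrow> 'a::comm_ring_1"
  shows "(\<Sum>n<Suc N. u n * g n) = (\<Sum>k\<le>N. u k) * g (Suc N) + (\<Sum>n<Suc N. (\<Sum>k\<le>n. u k) * (g n - g (Suc n)))"
  by (induction N) (simp_all add: algebra_simps)

lemma deriv_npow:
  "((\<lambda>w. of_nat n powr (-w)) has_field_derivative (- Ln (of_nat n) * of_nat n powr (-w))) (at w)"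
proof (cases "n = 0")
  case True then show ?thesis by simp
next
  case False
  have "((\<lambda>w. of_nat n powr (-w)) has_field_derivative (Ln (of_nat n) * of_nat n powr (-w)) * (-1)) (at w)"
    by (rule DERIV_chain2[where f="\<lambda>z. of_nat n powr z"]) (auto intro!: derivative_eq_intros simp: False)
  then show ?thesis by simp
qed

lemma norm_npow: "norm (of_nat n powr (w::complex)) = real n powr Re w"
  by (subst norm_powr_real_powr) auto

lemma mvt_bound:
  fixes w :: complex
  assumes "n \<ge> 1" "Re w > 0"
  shows "norm (of_nat n powr (-w) - of_nat (Suc n) powr (-w)) \<le> norm w * real n powr (- Re w - 1)"
proof -
  define S where "S = closed_segment (of_nat n :: complex) (of_nat (Suc n))"
  have memS: "\<exists>t. z = of_real t \<and> t \<ge> real n" if "z \<in> S" for z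
  proof -
    from that obtain v where v: "0 \<le> v" "v \<le> 1" "z = (1 - v) *\<^sub>R of_nat n + v *\<^sub>R of_nat (Suc n)"
      unfolding S_def closed_segment_def by auto
    have "z = of_real (real n + v)" using v by (simp add: scaleR_conv_of_real algebra_simps)
    then show ?thesis using v by (intro exI[of _ "real n + v"]) auto
  qed
  have "norm ((\<lambda>z. z powr (-w)) (of_nat n) - (\<lambda>z. z powr (-w)) (of_nat (Suc n))) \<le> (norm w * real n powr (- Re w - 1)) * norm (of_nat n - of_nat (Suc n) :: complex)"
  proof (rule field_differentiable_bound[where f'="\<lambda>z. (-w) * z powr (-w - 1)"])
    show "convex S" unfolding S_def by simp
    show "of_nat n \<in> S" "of_nat (Suc n) \<in> S" unfolding S_def by auto
    fix z assume "z \<in> S"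
    then obtain t where t: "z = of_real t" "t \<ge> real n" using memS by blast
    have tpos: "t > 0" using t assms by auto
    have "z \<notin> \<real>\<^sub>\<le>\<^sub>0" using t tpos by (auto simp: complex_nonpos_Reals_iff)
    then show "((\<lambda>z. z powr (-w)) has_field_derivative (-w) * z powr (-w - 1)) (at z within S)"
      by (rule has_field_derivative_at_within[OF has_field_derivative_powr])
    have "norm ((-w) * z powr (-w - 1)) = norm w * t powr (- Re w - 1)"
      using t tpos by (simp add: norm_mult norm_powr_real_powr)
    also have "\<dots> \<le> norm w * real n powr (- Re w - 1)"
      using t assms by (intro mult_left_mono powr_mono2') auto
    finally show "norm ((-w) * z powr (-w - 1)) \<le> norm w * real n powr (- Re w - 1)" .
  qed
  then show ?thesis by simp
qed

lemma dirichlet_holo: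
  fixes u :: "nat \<Rightarrow> complex"
  assumes su: "summable u" and u0: "u 0 = 0"
  shows "(\<lambda>w. \<Sum>n. u n * of_nat n powr (-w)) holomorphic_on {w. Re w > 0}"
proof -
  define U where "U n = (\<Sum>k\<le>n. u k)" for n
  have "U \<longlonglongrightarrow> suminf u" unfolding U_def by (rule summable_LIMSEQ'[OF su])
  then have "Bseq U" by (intro convergent_imp_Bseq convergentI)
  then obtain M where Mpos: "M > 0" and M: "\<And>n. norm (U n) \<le> M" by (auto elim: BseqE)
  define gg where "gg n w = (of_nat n powr (-w) :: complex)" for n w
  define F where "F n w = U n * (gg n w - gg (Suc n) w)" for n w
  define F' where "F' n w = U n * (- Ln (of_nat n) * of_nat n powr (-w) - (- Ln (of_nat (Suc n)) * of_nat (Suc n) powr (-w)))" for n w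
  define S where "S = {w::complex. Re w > 0}"
  have openS: "open S" unfolding S_def by (rule open_halfspace_Re_gt)
  have "\<exists>g g'. \<forall>x\<in>S. (\<lambda>n. F n x) sums g x \<and> (\<lambda>n. F' n x) sums g' x \<and> (g has_field_derivative g' x) (at x)"
  proof (rule series_and_derivative_comparison_local[OF openS])
    fix n x
    show "(F n has_field_derivative F' n x) (at x)"
      unfolding F_def F'_def gg_def
      by (intro DERIV_cmult DERIV_diff deriv_npow)
  next
    fix x assume "x \<in> S"
    then have rx: "Re x > 0" unfolding S_def by simp
    define d where "d = Re x / 2"
    define h where "h n = M * (norm x + d) * real n powr (- d - 1)" for n
    have "summable h" unfolding h_def using rx d_def
      by (intro summable_mult) (simp add: summable_real_powr_iff)
    moreover have "\<forall>\<^sub>F n in sequentially. \<forall>y\<in>ball x d \<inter> S. norm (F n y) \<le> h n"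
      using eventually_ge_at_top[of 1]
    proof eventually_elim
      case (elim n)
      show ?case
      proof
        fix y assume y: "y \<in> ball x d \<inter> S"
        then have ny: "norm (x - y) < d" by (simp add: dist_norm)
        have "Re x - Re y \<le> norm (x - y)" using complex_Re_le_cmod[of "x - y"] by simp
        then have ry: "Re y \<ge> d" using ny d_def by linarith
        have nyb: "norm y \<le> norm x + d" using ny norm_triangle_sub[of y x] by (simp add: norm_minus_commute)
        have "norm (F n y) = norm (U n) * norm (gg n y - gg (Suc n) y)"
          unfolding F_def by (simp add: norm_mult)
        also have "\<dots> \<le> M * (norm y * real n powr (- Re y - 1))"
          unfolding gg_def using elim ry rx d_def Mpos
          by (intro mult_mono M mvt_bound) auto
        also have "\<dots> \<le> M * ((norm x + d) * real n powr (- d - 1))"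
          using elim ry Mpos nyb rx d_def
          by (intro mult_left_mono mult_mono powr_mono) auto
        finally show "norm (F n y) \<le> h n" unfolding h_def by simp
      qed
    qed
    ultimately show "\<exists>d h. 0 < d \<and> summable h \<and> (\<forall>\<^sub>F n in sequentially. \<forall>y\<in>ball x d \<inter> S. norm (F n y) \<le> h n)"
      using rx unfolding d_def by (intro exI[of _ "Re x / 2"] exI[of _ h]) auto
  qed
  then obtain g g' where gg': "\<And>x. x \<in> S \<Longrightarrow> (\<lambda>n. F n x) sums g x \<and> (g has_field_derivative g' x) (at x)"
    by blast
  have hol: "g holomorphic_on S" using gg' openS by (auto simp: holomorphic_on_open)
  have eq: "(\<Sum>n. u n * of_nat n powr (-w)) = g w" if w: "w \<in> S" for w
  proof -
    have rw: "Re w > 0" using w S_def by simp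
    have t1: "(\<lambda>N. \<Sum>n<Suc N. F n w) \<longlonglongrightarrow> g w"
      using gg'[OF w] unfolding sums_def by (intro LIMSEQ_Suc[where f="\<lambda>N. \<Sum>n<N. F n w"]) simp
    have t2: "(\<lambda>N. U N * gg (Suc N) w) \<longlonglongrightarrow> 0"
    proof (rule Lim_null_comparison)
      show "\<forall>\<^sub>F N in sequentially. norm (U N * gg (Suc N) w) \<le> M * real (Suc N) powr (- Re w)"
      proof (intro always_eventually allI)
        fix N
        have e: "norm (gg (Suc N) w) = real (Suc N) powr (- Re w)" unfolding gg_def by (subst norm_npow) simp
        show "norm (U N * gg (Suc N) w) \<le> M * real (Suc N) powr (- Re w)"
          unfolding norm_mult e by (intro mult_right_mono M) simp
      qed
      have lim0: "(\<lambda>N. real (Suc N) powr (- Re w)) \<longlonglongrightarrow> 0"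
      proof (rule tendsto_neg_powr)
        show "- Re w < 0" using rw by simp
        show "filterlim (\<lambda>N. real (Suc N)) at_top sequentially"
          by (rule filterlim_compose[OF filterlim_real_sequentially filterlim_Suc])
      qed
      then show "(\<lambda>N. M * real (Suc N) powr (- Re w)) \<longlonglongrightarrow> 0"
        using tendsto_mult[OF tendsto_const[of M] lim0] by simp
    qed
    have "(\<lambda>N. \<Sum>n<Suc N. u n * gg n w) \<longlonglongrightarrow> 0 + g w"
    proof -
      have "(\<lambda>N. U N * gg (Suc N) w + (\<Sum>n<Suc N. F n w)) \<longlonglongrightarrow> 0 + g w"
        by (intro tendsto_add t1 t2)
      moreover have "(\<Sum>n<Suc N. u n * gg n w) = U N * gg (Suc N) w + (\<Sum>n<Suc N. F n w)" for N
        unfolding F_def U_def by (rule abel_partial)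
      ultimately show ?thesis by simp
    qed
    then have "(\<lambda>N. \<Sum>n<Suc N. u n * gg n w) \<longlonglongrightarrow> g w" by simp
    then have "(\<lambda>n. u n * gg n w) sums g w" unfolding sums_def by (rule LIMSEQ_imp_Suc)
    then show ?thesis unfolding gg_def by (rule sums_unique[symmetric])
  qed
  show ?thesis unfolding S_def[symmetric]
    by (rule holomorphic_transform[OF hol]) (simp add: eq)
qed



lemma artin2:
  fixes X Y d :: "'a \<Rightarrow> complex"
  assumes "finite B" "inj_on (\<lambda>\<beta>. (X \<beta>, Y \<beta>)) B"
    and "\<forall>k l. (\<Sum>\<beta>\<in>B. d \<beta> * X \<beta> ^ k * Y \<beta> ^ l) = 0"
  shows "\<forall>\<beta>\<in>B. d \<beta> = 0"
  using assms
proof (induction B arbitrary: d rule: finite_induct)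
  case empty
  then show ?case by simp
next
  case (insert \<gamma> B)
  have inj: "inj_on (\<lambda>\<beta>. (X \<beta>, Y \<beta>)) B" using insert.prems(1) by (auto simp: inj_on_def)
  have hyp: "(\<Sum>\<beta>\<in>insert \<gamma> B. d \<beta> * X \<beta> ^ k * Y \<beta> ^ l) = 0" for k l
    using insert.prems(2) by blast
  define d1 where "d1 \<beta> = d \<beta> * (X \<beta> - X \<gamma>)" for \<beta>
  define d2 where "d2 \<beta> = d \<beta> * (Y \<beta> - Y \<gamma>)" for \<beta>
  have "(\<Sum>\<beta>\<in>B. d1 \<beta> * X \<beta> ^ k * Y \<beta> ^ l) = 0" for k l
  proof -
    have "(\<Sum>\<beta>\<in>B. d1 \<beta> * X \<beta> ^ k * Y \<beta> ^ l) = (\<Sum>\<beta>\<in>insert \<gamma> B. d1 \<beta> * X \<beta> ^ k * Y \<beta> ^ l)"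
      using insert.hyps by (simp add: d1_def)
    also have "\<dots> = (\<Sum>\<beta>\<in>insert \<gamma> B. d \<beta> * X \<beta> ^ Suc k * Y \<beta> ^ l) - X \<gamma> * (\<Sum>\<beta>\<in>insert \<gamma> B. d \<beta> * X \<beta> ^ k * Y \<beta> ^ l)"
      unfolding sum_distrib_left sum_subtractf[symmetric] d1_def
      by (intro sum.cong) (auto simp: algebra_simps)
    also have "\<dots> = 0" using hyp[of "Suc k" l] hyp[of k "Suc l"] hyp[of k l] by (simp only:) simp
    finally show ?thesis .
  qed
  then have z1: "\<forall>\<beta>\<in>B. d1 \<beta> = 0" using insert.IH inj by blast
  have "(\<Sum>\<beta>\<in>B. d2 \<beta> * X \<beta> ^ k * Y \<beta> ^ l) = 0" for k l
  proof -
    have "(\<Sum>\<beta>\<in>B. d2 \<beta> * X \<beta> ^ k * Y \<beta> ^ l) = (\<Sum>\<beta>\<in>insert \<gamma> B. d2 \<beta> * X \<beta> ^ k * Y \<beta> ^ l)"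
      using insert.hyps by (simp add: d2_def)
    also have "\<dots> = (\<Sum>\<beta>\<in>insert \<gamma> B. d \<beta> * X \<beta> ^ k * Y \<beta> ^ Suc l) - Y \<gamma> * (\<Sum>\<beta>\<in>insert \<gamma> B. d \<beta> * X \<beta> ^ k * Y \<beta> ^ l)"
      unfolding sum_distrib_left sum_subtractf[symmetric] d2_def
      by (intro sum.cong) (auto simp: algebra_simps)
    also have "\<dots> = 0" using hyp[of "Suc k" l] hyp[of k "Suc l"] hyp[of k l] by (simp only:) simp
    finally show ?thesis .
  qed
  then have z2: "\<forall>\<beta>\<in>B. d2 \<beta> = 0" using insert.IH inj by blast
  have zB: "\<forall>\<beta>\<in>B. d \<beta> = 0"
  proof
    fix \<beta> assume b: "\<beta> \<in> B"
    then have "(X \<beta>, Y \<beta>) \<noteq> (X \<gamma>, Y \<gamma>)" using insert.prems(1) insert.hyps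
      by (auto simp: inj_on_def)
    then show "d \<beta> = 0" using z1 z2 b by (auto simp: d1_def d2_def)
  qed
  have "d \<gamma> = 0" using hyp[of 0 0] zB insert.hyps by simp
  then show ?case using zB by simp
qed



lemma dirichlet_unique:
  fixes a :: "nat \<Rightarrow> complex" and \<sigma>0 :: real
  assumes sums0: "\<And>\<sigma>. \<sigma> > \<sigma>0 \<Longrightarrow> (\<lambda>n. a n * of_real (real n powr (- \<sigma>))) sums 0"
  shows "n \<ge> 1 \<Longrightarrow> a n = 0"
proof (induction n rule: less_induct)
  case (less n0)
  define \<sigma>1 where "\<sigma>1 = \<sigma>0 + 1"
  define v where "v n = a n * of_real (real n powr (- \<sigma>1))" for n
  have "summable v" using sums0[of \<sigma>1] unfolding v_def \<sigma>1_def by (auto simp: sums_iff)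
  then have "v \<longlonglongrightarrow> 0" by (rule summable_LIMSEQ_zero)
  then have "Bseq v" by (intro convergent_imp_Bseq convergentI)
  then obtain M where Mpos: "M > 0" and M: "\<And>n. norm (v n) \<le> M" by (auto elim: BseqE)
  have n0: "n0 \<ge> 1" using less.prems .
  define D where "D = (\<Sum>n. inverse (real (n + Suc n0) ^ 2))"
  have sD: "summable (\<lambda>n. inverse (real (n + Suc n0) ^ 2))"
    using summable_ignore_initial_segment[OF inverse_power_summable[of 2, where 'a=real], of "Suc n0"] by simp
  define r where "r = real n0 / real (Suc n0)"
  have bound: "norm (v n0) \<le> M * real n0 ^ 2 * D * r ^ j" for j
  proof -
    define k where "k = j + 2"
    define T where "T n = v n * of_real ((1 / real n) ^ k)" for n
    have T_eq: "a n * of_real (real n powr (- (\<sigma>1 + real k))) = T n" for n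
    proof (cases "n = 0")
      case True then show ?thesis by (simp add: T_def v_def k_def)
    next
      case False
      have "real n powr (- (\<sigma>1 + real k)) = real n powr (- \<sigma>1) * real n powr (- real k)"
        by (simp add: powr_add[symmetric])
      also have "real n powr (- real k) = (1 / real n) ^ k"
        using False by (simp add: powr_minus powr_realpow power_one_over inverse_eq_divide)
      finally show ?thesis by (simp add: T_def v_def)
    qed
    have "(\<lambda>n. a n * of_real (real n powr (- (\<sigma>1 + real k)))) sums 0"
      by (rule sums0) (simp add: \<sigma>1_def)
    then have Ts: "T sums 0" unfolding T_eq .
    have Tlow: "T n = 0" if "n < n0" for n
    proof (cases "n = 0")
      case True then show ?thesis by (simp add: T_def k_def)
    next
      case False then show ?thesis using less.IH[of n] that by (simp add: T_def v_def)
    qed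
    have sT: "summable T" using Ts by (simp add: sums_iff)
    have "suminf T = (\<Sum>n. T (n + Suc n0)) + (\<Sum>i<Suc n0. T i)"
      by (rule suminf_split_initial_segment[OF sT])
    moreover have "(\<Sum>i<Suc n0. T i) = T n0" using Tlow by (simp add: sum.lessThan_Suc)
    ultimately have "(\<Sum>n. T (n + Suc n0)) + T n0 = 0" using Ts by (simp add: sums_iff)
    then have Tn0: "T n0 = - (\<Sum>n. T (n + Suc n0))" by (simp add: eq_neg_iff_add_eq_0 add.commute)
    have tb: "norm (T (n + Suc n0)) \<le> M * ((1 / real (Suc n0)) ^ j * inverse (real (n + Suc n0) ^ 2))" for n
    proof -
      have "norm (T (n + Suc n0)) = norm (v (n + Suc n0)) * (1 / real (n + Suc n0)) ^ k"
        unfolding T_def norm_mult norm_of_real by simp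
      also have "\<dots> \<le> M * ((1 / real (Suc n0)) ^ j * inverse (real (n + Suc n0) ^ 2))"
      proof (intro mult_mono M)
        have "(1 / real (n + Suc n0)) ^ j \<le> (1 / real (Suc n0)) ^ j"
          by (intro power_mono divide_left_mono) auto
        then show "(1 / real (n + Suc n0)) ^ k \<le> (1 / real (Suc n0)) ^ j * inverse (real (n + Suc n0) ^ 2)"
          unfolding k_def power_add by (intro mult_mono) (auto simp: power_one_over inverse_eq_divide)
      qed (use Mpos in auto)
      finally show ?thesis .
    qed
    have sb: "summable (\<lambda>n. M * ((1 / real (Suc n0)) ^ j * inverse (real (n + Suc n0) ^ 2)))"
      by (intro summable_mult sD)
    have sN: "summable (\<lambda>n. norm (T (n + Suc n0)))"
      by (rule summable_comparison_test[OF _ sb]) (use tb in auto)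
    have "norm (T n0) \<le> (\<Sum>n. norm (T (n + Suc n0)))"
      unfolding Tn0 norm_minus_cancel by (rule summable_norm[OF sN])
    also have "\<dots> \<le> (\<Sum>n. M * ((1 / real (Suc n0)) ^ j * inverse (real (n + Suc n0) ^ 2)))"
      by (rule suminf_le[OF tb sN sb])
    also have "\<dots> = M * (1 / real (Suc n0)) ^ j * D"
      unfolding D_def by (subst suminf_mult[OF sD, symmetric]) (simp add: suminf_mult algebra_simps)
    finally have A: "norm (T n0) \<le> M * (1 / real (Suc n0)) ^ j * D" .
    have "norm (T n0) = norm (v n0) * (1 / real n0) ^ k" unfolding T_def norm_mult norm_of_real by simp
    then have "norm (v n0) = norm (T n0) * real n0 ^ k" using n0 by (simp add: power_one_over field_simps)
    also have "\<dots> \<le> M * (1 / real (Suc n0)) ^ j * D * real n0 ^ k"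
      by (intro mult_right_mono A) auto
    also have "\<dots> = M * real n0 ^ 2 * D * r ^ j"
      unfolding r_def k_def by (simp add: power_add power_divide field_simps power2_eq_square)
    finally show ?thesis .
  qed
  have "(\<lambda>j. M * real n0 ^ 2 * D * r ^ j) \<longlonglongrightarrow> M * real n0 ^ 2 * D * 0"
    unfolding r_def by (intro tendsto_mult_left LIMSEQ_power_zero) auto
  then have "norm (v n0) \<le> 0" 
    by (intro LIMSEQ_le_const[where X="\<lambda>j. M * real n0 ^ 2 * D * r ^ j"]) (use bound in auto)
  then have "v n0 = 0" by simp
  then show "a n0 = 0" using n0 by (simp add: v_def)
qed



lemma npow_exp: "n \<ge> 1 \<Longrightarrow> (of_nat n::complex) powr z = exp (z * of_real (ln (real n)))"
  by (simp add: powr_def Ln_of_nat)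

lemma npow_real: "(of_nat n :: complex) powr (- of_real \<sigma>) = of_real (real n powr (- \<sigma>))"
  by (metis of_real_of_nat_eq of_real_minus powr_of_real of_nat_0_le_iff)

lemma inj_XY:
  fixes p q :: nat and \<beta> \<beta>' :: real
  assumes p: "p \<ge> 2" and q: "q \<ge> 2" and cop: "coprime p q"
    and ep: "exp (\<i> * of_real \<beta> * of_real (ln (real p))) = exp (\<i> * of_real \<beta>' * of_real (ln (real p)))"
    and eq: "exp (\<i> * of_real \<beta> * of_real (ln (real q))) = exp (\<i> * of_real \<beta>' * of_real (ln (real q)))"
  shows "\<beta> = \<beta>'"
proof (rule ccontr)
  assume ne: "\<beta> \<noteq> \<beta>'"
  have lp: "ln (real p) > 0" and lq: "ln (real q) > 0" using p q by auto
  from ep obtain m :: int where m: "\<i> * of_real \<beta> * of_real (ln (real p)) = \<i> * of_real \<beta>' * of_real (ln (real p)) + complex_of_real (real_of_int (2 * m) * pi) * \<i>"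
    unfolding exp_eq by blast
  from eq obtain m' :: int where m': "\<i> * of_real \<beta> * of_real (ln (real q)) = \<i> * of_real \<beta>' * of_real (ln (real q)) + complex_of_real (real_of_int (2 * m') * pi) * \<i>"
    unfolding exp_eq by blast
  have m1: "(\<beta> - \<beta>') * ln (real p) = 2 * m * pi"
    using arg_cong[OF m, of Im] by (simp add: algebra_simps)
  have m2: "(\<beta> - \<beta>') * ln (real q) = 2 * m' * pi"
    using arg_cong[OF m', of Im] by (simp add: algebra_simps)
  have "m \<noteq> 0" using m1 ne lp by auto
  have "m' \<noteq> 0" using m2 ne lq by auto
  have "(\<beta> - \<beta>') * (m' * ln (real p)) = (\<beta> - \<beta>') * (m * ln (real q))"
    using m1 m2 by (simp add: algebra_simps)
  then have e1: "m' * ln (real p) = m * ln (real q)" using ne by simp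
  then have "\<bar>m' * ln (real p)\<bar> = \<bar>m * ln (real q)\<bar>" by simp
  then have e2: "real (nat \<bar>m'\<bar>) * ln (real p) = real (nat \<bar>m\<bar>) * ln (real q)"
    using lp lq by (simp add: abs_mult)
  define a where "a = nat \<bar>m'\<bar>"
  define c where "c = nat \<bar>m\<bar>"
  have a1: "a \<ge> 1" using \<open>m' \<noteq> 0\<close> a_def by simp
  have "ln (real (p ^ a)) = ln (real (q ^ c))"
    using e2 p q by (simp add: ln_realpow a_def c_def)
  then have "real (p ^ a) = real (q ^ c)" using p q by (subst (asm) ln_inj_iff) auto
  then have pq: "p ^ a = q ^ c" by (simp only: of_nat_eq_iff)
  have "coprime (p ^ a) (q ^ c)" using cop by simp
  then have "coprime (p ^ a) (p ^ a)" using pq by simp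
  then have "p ^ a = 1" by simp
  then show False using p a1 by simp
qed


theorem proposition5p5:
  fixes \<rho> :: real and b :: "nat \<Rightarrow> real"
  assumes "admissible b"
    and "\<And>\<beta> s. s \<in> half_plane \<rho> \<Longrightarrow> summable (tw_term b \<beta> s)"
  shows "(\<forall>\<beta>. tw_series b \<beta> holomorphic_on half_plane \<rho>) \<and>
         (\<forall>B c. finite B \<longrightarrow>
            (\<forall>s\<in>half_plane \<rho>. (\<Sum>\<beta>\<in>B. c \<beta> * tw_series b \<beta> s) = 0) \<longrightarrow>
            (\<forall>\<beta>\<in>B. c \<beta> = (0::complex)))"
proof (intro conjI allI impI)
  have openH: "open (half_plane r)" for r unfolding half_plane_def by (rule open_halfspace_Re_gt)
  have supp0: "0 \<notin> supp_seq b" by (simp add: supp_seq_def)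
  fix \<beta>
  show "tw_series b \<beta> holomorphic_on half_plane \<rho>"
    unfolding holomorphic_on_open[OF openH]
  proof
    fix s0 assume s0: "s0 \<in> half_plane \<rho>"
    define \<sigma>1 where "\<sigma>1 = (\<rho> + Re s0) / 2"
    have s0': "s0 \<in> half_plane \<sigma>1" using s0 by (simp add: half_plane_def \<sigma>1_def)
    define u where "u n = tw_term b \<beta> (of_real \<sigma>1) n" for n
    have su: "summable u" unfolding u_def using s0
      by (intro assms(2)) (simp add: half_plane_def \<sigma>1_def)
    have u0: "u 0 = 0" using supp0 by (simp add: u_def tw_term_def)
    define G where "G w = (\<Sum>n. u n * of_nat n powr (-w))" for w
    have hG: "G holomorphic_on {w. Re w > 0}" unfolding G_def by (rule dirichlet_holo[OF su u0])
    have "(G \<circ> (\<lambda>s. s - of_real \<sigma>1)) holomorphic_on half_plane \<sigma>1"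
      by (rule holomorphic_on_compose_gen[OF _ hG]) (auto simp: half_plane_def intro!: holomorphic_intros)
    moreover have "(G \<circ> (\<lambda>s. s - of_real \<sigma>1)) s = tw_series b \<beta> s" if "s \<in> half_plane \<sigma>1" for s
    proof -
      have "tw_term b \<beta> s n = u n * of_nat n powr (- (s - of_real \<sigma>1))" for n
      proof -
        have "(of_nat n :: complex) powr (- s) = of_nat n powr (- of_real \<sigma>1) * of_nat n powr (- (s - of_real \<sigma>1))"
          by (simp add: powr_add[symmetric])
        then show ?thesis by (simp add: u_def tw_term_def)
      qed
      then show ?thesis by (simp add: G_def tw_series_def)
    qed
    ultimately have "tw_series b \<beta> holomorphic_on half_plane \<sigma>1" by (rule holomorphic_transform)
    then show "\<exists>f'. (tw_series b \<beta> has_field_derivative f') (at s0)"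
      using s0' openH by (auto simp: holomorphic_on_open)
  qed
next
  fix B and c :: "real \<Rightarrow> complex"
  assume finB: "finite B" and hz: "\<forall>s\<in>half_plane \<rho>. (\<Sum>\<beta>\<in>B. c \<beta> * tw_series b \<beta> s) = 0"
  define e where "e n = (if n \<in> supp_seq b then (\<Sum>\<beta>\<in>B. c \<beta> * of_nat n powr (\<i> * of_real \<beta>)) * of_real (b n) else 0)" for n
  have key: "(\<lambda>n. e n * of_nat n powr (-s)) sums 0" if s: "s \<in> half_plane \<rho>" for s
  proof -
    have "(\<lambda>n. \<Sum>\<beta>\<in>B. c \<beta> * tw_term b \<beta> s n) sums (\<Sum>\<beta>\<in>B. c \<beta> * tw_series b \<beta> s)"
      unfolding tw_series_def
      by (intro sums_sum sums_mult summable_sums assms(2) s)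
    moreover have "(\<Sum>\<beta>\<in>B. c \<beta> * tw_term b \<beta> s n) = e n * of_nat n powr (-s)" for n
      by (simp add: e_def tw_term_def sum_distrib_left sum_distrib_right mult_ac)
    ultimately show ?thesis using hz s by simp
  qed
  have e0: "e n = 0" if "n \<ge> 1" for n
  proof (rule dirichlet_unique[OF _ that])
    fix \<sigma> :: real assume "\<sigma> > \<rho>"
    then have "(\<lambda>n. e n * of_nat n powr (- of_real \<sigma>)) sums 0" by (intro key) (simp add: half_plane_def)
    then show "(\<lambda>n. e n * of_real (real n powr (- \<sigma>))) sums 0" by (simp only: npow_real)
  qed
  have vanish: "(\<Sum>\<beta>\<in>B. c \<beta> * of_nat n powr (\<i> * of_real \<beta>)) = 0" if n: "n \<in> supp_seq b" for n
  proof -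
    have "n \<ge> 1" "b n \<noteq> 0" using n by (auto simp: supp_seq_def)
    then show ?thesis using e0[of n] n by (simp add: e_def)
  qed
  from assms(1) obtain p q where p: "p \<in> supp_seq b" "p \<noteq> 1" and q: "q \<in> supp_seq b" "q \<noteq> 1"
    and cop: "coprime p q" and mult: "\<And>m n. m \<in> supp_seq b \<Longrightarrow> n \<in> supp_seq b \<Longrightarrow> m * n \<in> supp_seq b"
    unfolding admissible_def by blast
  have p2: "p \<ge> 2" and q2: "q \<ge> 2" using p q by (auto simp: supp_seq_def)
  have ppow: "p ^ Suc k \<in> supp_seq b" for k
    by (induction k) (use p mult in auto)
  have pqpow: "p ^ Suc k * q ^ l \<in> supp_seq b" for k l
  proof (induction l)
    case 0 then show ?case using ppow by simp
  next
    case (Suc l)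
    have "p ^ Suc k * q ^ Suc l = (p ^ Suc k * q ^ l) * q" by simp
    then show ?case using mult[OF Suc q(1)] by (simp only:)
  qed
  define X where "X \<beta> = exp (\<i> * of_real \<beta> * of_real (ln (real p)))" for \<beta>
  define Y where "Y \<beta> = exp (\<i> * of_real \<beta> * of_real (ln (real q)))" for \<beta>
  have pw: "of_nat (p ^ Suc k * q ^ l) powr (\<i> * of_real \<beta>) = X \<beta> ^ Suc k * Y \<beta> ^ l" for k l \<beta>
  proof -
    have "of_nat (p ^ Suc k * q ^ l) powr (\<i> * of_real \<beta>) = exp (\<i> * of_real \<beta> * of_real (ln (real (p ^ Suc k * q ^ l))))"
      using p2 q2 by (intro npow_exp) simp
    also have "ln (real (p ^ Suc k * q ^ l)) = real (Suc k) * ln (real p) + real l * ln (real q)"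
      using p2 q2 by (simp add: ln_mult ln_realpow algebra_simps)
    also have "exp (\<i> * of_real \<beta> * of_real (real (Suc k) * ln (real p) + real l * ln (real q)))
       = exp (of_nat (Suc k) * (\<i> * of_real \<beta> * of_real (ln (real p)))) * exp (of_nat l * (\<i> * of_real \<beta> * of_real (ln (real q))))"
      by (simp add: exp_add[symmetric] algebra_simps)
    also have "\<dots> = X \<beta> ^ Suc k * Y \<beta> ^ l" unfolding X_def Y_def exp_of_nat_mult ..
    finally show ?thesis .
  qed
  have inj: "inj_on (\<lambda>\<beta>. (X \<beta>, Y \<beta>)) B"
    by (rule inj_onI) (use inj_XY[OF p2 q2 cop] in \<open>auto simp: X_def Y_def\<close>)
  have "\<forall>\<beta>\<in>B. c \<beta> * X \<beta> = 0"
  proof (rule artin2[OF finB inj], intro allI)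
    fix k l
    have "(\<Sum>\<beta>\<in>B. c \<beta> * X \<beta> * X \<beta> ^ k * Y \<beta> ^ l) = (\<Sum>\<beta>\<in>B. c \<beta> * of_nat (p ^ Suc k * q ^ l) powr (\<i> * of_real \<beta>))"
      unfolding pw by (simp add: algebra_simps)
    also have "\<dots> = 0" by (rule vanish[OF pqpow])
    finally show "(\<Sum>\<beta>\<in>B. c \<beta> * X \<beta> * X \<beta> ^ k * Y \<beta> ^ l) = 0" .
  qed
  then show "\<forall>\<beta>\<in>B. c \<beta> = 0" by (simp add: X_def)
qed

end
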